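(* A choice function $C$ is consistent if and only if the assessment $\mathcal{A}_C$ is consistent.
   Context: Let $\mathcal{X}$ be a nonempty set and let $\mathscr{V}$ be the real vector space of all functions $u:\mathcal{X}\to\mathbb{R}$ (options), with pointwise operations. For $u,v\in\mathscr{V}$, $u\le v$ iff $u(x)\le v(x)$ for all $x\in\mathcal{X}$, and $u<v$ iff $u\le v$ and $u\neq v$. Let $\mathscr{V}_{>0}=\{u\in\mathscr{V}:0<u\}$ and $\mathscr{V}^s_{>0}=\{\{u\}:u\in\mathscr{V}_{>0}\}$. Let $\mathscr{Q}$ be the set of all finite subsets of $\mathscr{V}$ (including $\emptyset$). For $A\in\mathscr{Q}$ and $u\in\mathscr{V}$, $A-u=\{v-u:v\in A\}$. For a positive integer $n$, $\mathbb{R}^{n,+}=\{\boldsymbol\lambda\in\mathbb{R}^n:\lambda_j\ge0\ \forall j,\ \sum_j\lambda_j>0\}$, and for $\boldsymbol\lambda\in\mathbb{R}^n$, $\mathbf u=(u_1,\dots,u_n)\in\mathscr{V}^n$, $\boldsymbol\lambda\mathbf u=\sum_{j=1}^n\lambda_ju_j$. A choice function is a map $C:\mathscr{Q}\to\mathscr{Q}$ with $C(A)\subseteq A$ for all $A$; its rejection function is $R_C(A)=A\setminus C(A)$, and $K_C=\{A\in\mathscr{Q}:0\notin C(A\cup\{0\})\}$. $C$ is coherent if: (C0) $C(A)\neq\emptyset$ for all nonempty $A\in\mathscr{Q}$; (C1) for all $A\in\mathscr{Q}$ and $u\in A$: $u\in C(A)\iff 0\in C(A-u)$; (C2) $\{u\}\in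 K_C$ for all $u\in\mathscr{V}_{>0}$; (C3) for all $A,B\in K_C$ and all maps $\boldsymbol\lambda:A\times B\to\mathbb{R}^{2,+}$, $\{\boldsymbol\lambda(\mathbf u)\mathbf u:\mathbf u\in A\times B\}\in K_C$; (C4) $A\subseteq B\Rightarrow R_C(A)\subseteq R_C(B)$ for all $A,B\in\mathscr{Q}$. $\mathcal{C}$ denotes the set of coherent choice functions. For a choice function $C$, $\mathcal C_C=\{C'\in\mathcal C: C'(A)\subseteq C(A)\text{ for all }A\in\mathscr{Q}\}$ and $C$ is called consistent if $\mathcal C_C\neq\emptyset$. A set of desirable option sets is any $K\subseteq\mathscr{Q}$. It is coherent if for all $A,B\in K$: (K0) $A\setminus\{0\}\in K$; (K1) $\{0\}\notin K$; (K2) $\mathscr{V}^s_{>0}\subseteq K$; (K3) $\{\boldsymbol\lambda(\mathbf u)\mathbf u:\mathbf u\in A\times B\}\in K$ for every map $\boldsymbol\lambda:A\times B\to\mathbb{R}^{2,+}$; (K4) $A\cup Q\in K$ for all $Q\in\mathscr{Q}$. $\bar{\mathbf K}$ denotes the set of coherent sets of desirable option sets. An assessment is any subset $\mathcal{A}\subseteq\mathscr{Q}$; $\bar{\mathbf K}(\mathcal A)=\{K\in\bar{\mathbf K}:\mathcal A\subseteq K\}$, and $\mathcal A$ is called consistent if $\bar{\mathbf K}(\mathcal A)\neq\emptyset$. For a choice function $C$, $\mathcal A_C=\{C(A)-u:A\in\mathscr{Q},\ u\in R_C(A)\}$. *)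

theory Defs
  imports Complex_Main
begin

text \<open>Options are real-valued functions on a (nonempty) type 'x; option sets
  (elements of Q) are finite sets of options.\<close>

type_synonym 'x opt = "'x \<Rightarrow> real"

definition zero_opt :: "'x opt" where
  "zero_opt = (\<lambda>_. 0)"

definition pos_opt :: "'x opt \<Rightarrow> bool" where
  "pos_opt u \<longleftrightarrow> (\<forall>x. 0 \<le> u x) \<and> u \<noteq> zero_opt"

definition shift :: "'x opt set \<Rightarrow> 'x opt \<Rightarrow> 'x opt set" where
  "shift A u = (\<lambda>v. (\<lambda>x. v x - u x)) ` A"

definition pos_weight :: "real \<times> real \<Rightarrow> bool" where
  "pos_weight l \<longleftrightarrow> fst l \<ge> 0 \<and> snd l \<ge> 0 \<and> fst l + snd l > 0"

definition posi_comb :: "('x opt \<times> 'x opt \<Rightarrow> real \<times> real) \<Rightarrow> 'x opt set \<Rightarrow> 'x opt set \<Rightarrow> 'x opt set" where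
  "posi_comb l A B = (\<lambda>(u, v). (\<lambda>x. fst (l (u, v)) * u x + snd (l (u, v)) * v x)) ` (A \<times> B)"

definition choice_function :: "('x opt set \<Rightarrow> 'x opt set) \<Rightarrow> bool" where
  "choice_function C \<longleftrightarrow> (\<forall>A. finite A \<longrightarrow> C A \<subseteq> A)"

definition rej :: "('x opt set \<Rightarrow> 'x opt set) \<Rightarrow> 'x opt set \<Rightarrow> 'x opt set" where
  "rej C A = A - C A"

definition K_of :: "('x opt set \<Rightarrow> 'x opt set) \<Rightarrow> 'x opt set set" where
  "K_of C = {A. finite A \<and> zero_opt \<notin> C (insert zero_opt A)}"

definition coherent_cf :: "('x opt set \<Rightarrow> 'x opt set) \<Rightarrow> bool" where
  "coherent_cf C \<longleftrightarrow>
     choice_function C \<and>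
     (\<forall>A. finite A \<and> A \<noteq> {} \<longrightarrow> C A \<noteq> {}) \<and>
     (\<forall>A u. finite A \<and> u \<in> A \<longrightarrow> (u \<in> C A \<longleftrightarrow> zero_opt \<in> C (shift A u))) \<and>
     (\<forall>u. pos_opt u \<longrightarrow> {u} \<in> K_of C) \<and>
     (\<forall>A\<in>K_of C. \<forall>B\<in>K_of C. \<forall>l. (\<forall>p\<in>A \<times> B. pos_weight (l p)) \<longrightarrow>
         posi_comb l A B \<in> K_of C) \<and>
     (\<forall>A B. finite A \<and> finite B \<and> A \<subseteq> B \<longrightarrow> rej C A \<subseteq> rej C B)"

definition consistent_cf :: "('x opt set \<Rightarrow> 'x opt set) \<Rightarrow> bool" where
  "consistent_cf C \<longleftrightarrow>
     (\<exists>C'. coherent_cf C' \<and> (\<forall>A. finite A \<longrightarrow> C' A \<subseteq> C A))"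

definition coherent_K :: "'x opt set set \<Rightarrow> bool" where
  "coherent_K K \<longleftrightarrow>
     (\<forall>A\<in>K. finite A) \<and>
     (\<forall>A\<in>K. A - {zero_opt} \<in> K) \<and>
     {zero_opt} \<notin> K \<and>
     (\<forall>u. pos_opt u \<longrightarrow> {u} \<in> K) \<and>
     (\<forall>A\<in>K. \<forall>B\<in>K. \<forall>l. (\<forall>p\<in>A \<times> B. pos_weight (l p)) \<longrightarrow> posi_comb l A B \<in> K) \<and>
     (\<forall>A\<in>K. \<forall>Q. finite Q \<longrightarrow> A \<union> Q \<in> K)"

definition consistent_assessment :: "'x opt set set \<Rightarrow> bool" where
  "consistent_assessment \<A> \<longleftrightarrow> (\<exists>K. coherent_K K \<and> \<A> \<subseteq> K)"

definition assessment_of :: "('x opt set \<Rightarrow> 'x opt set) \<Rightarrow> 'x opt set set" where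
  "assessment_of C = {shift (C A) u | A u. finite A \<and> u \<in> rej C A}"

end

theory Submission
  imports Defs
begin

lemma shift_zero_mem: "u \<in> A \<Longrightarrow> zero_opt \<in> shift A u"
  unfolding shift_def zero_opt_def by (rule image_eqI[of _ _ u]) auto

lemma shift_by_zero: "shift A zero_opt = A"
  by (simp add: shift_def zero_opt_def)

lemma shift_minus: "shift (A - {u}) u = shift A u - {zero_opt}"
  by (auto simp: shift_def zero_opt_def fun_eq_iff)

lemma shift_mono: "A \<subseteq> B \<Longrightarrow> shift A u \<subseteq> shift B u"
  by (auto simp: shift_def)

lemma shift_finite: "finite A \<Longrightarrow> finite (shift A u)"
  by (simp add: shift_def)

lemma cK_fin: "coherent_K K \<Longrightarrow> A \<in> K \<Longrightarrow> finite A" by (simp add: coherent_K_def)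
lemma cK_0: "coherent_K K \<Longrightarrow> A \<in> K \<Longrightarrow> A - {zero_opt} \<in> K" by (simp add: coherent_K_def)
lemma cK_2: "coherent_K K \<Longrightarrow> pos_opt u \<Longrightarrow> {u} \<in> K" by (simp add: coherent_K_def)
lemma cK_3: "coherent_K K \<Longrightarrow> A \<in> K \<Longrightarrow> B \<in> K \<Longrightarrow> \<forall>p\<in>A \<times> B. pos_weight (l p) \<Longrightarrow> posi_comb l A B \<in> K"
  by (simp add: coherent_K_def)

lemma K_empty:
  assumes "coherent_K K" shows "{} \<notin> K"
proof
  assume "{} \<in> K"
  moreover have "\<forall>A\<in>K. \<forall>Q. finite Q \<longrightarrow> A \<union> Q \<in> K" "{zero_opt} \<notin> K"
    using assms unfolding coherent_K_def by simp_all
  ultimately show False by (metis finite.emptyI finite.insertI sup_bot.left_neutral)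
qed

lemma K_sup:
  assumes "coherent_K K" "X \<in> K" "X \<subseteq> Y" "finite Y" shows "Y \<in> K"
proof -
  have "\<forall>A\<in>K. \<forall>Q. finite Q \<longrightarrow> A \<union> Q \<in> K" using assms(1) unfolding coherent_K_def by simp
  then have "X \<union> Y \<in> K" using assms by blast
  moreover have "X \<union> Y = Y" using assms by blast
  ultimately show ?thesis by simp
qed

lemma K_elim:
  assumes K: "coherent_K K" and fA: "finite A" and r: "r \<in> A" and w: "w \<in> A"
    and wr: "w \<noteq> r" and Hw: "shift A w \<in> K" and Hr: "shift A r \<in> K"
  shows "shift (A - {r}) w \<in> K"
proof -
  let ?Y = "shift A r - {zero_opt}"
  have Y: "?Y \<in> K" using cK_0[OF K Hr] .
  have "?Y \<noteq> {}" using Y K_empty[OF K] by metis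
  then obtain y0 where y0: "y0 \<in> ?Y" by blast
  define l where "l = (\<lambda>p::'a opt \<times> 'a opt. if fst p = (\<lambda>t. r t - w t) then (1::real,1::real) else (1,0))"
  have pw: "\<forall>p\<in>shift A w \<times> ?Y. pos_weight (l p)" by (simp add: l_def pos_weight_def)
  have comb: "posi_comb l (shift A w) ?Y \<in> K" using cK_3[OF K Hw Y pw] .
  have eq: "posi_comb l (shift A w) ?Y = shift (A - {r}) w"
  proof
    show "posi_comb l (shift A w) ?Y \<subseteq> shift (A - {r}) w"
    proof
      fix z assume "z \<in> posi_comb l (shift A w) ?Y"
      then obtain x y where xy: "x \<in> shift A w" "y \<in> ?Y"
        and z: "z = (\<lambda>t. fst (l (x, y)) * x t + snd (l (x, y)) * y t)"
        by (auto simp: posi_comb_def)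
      from xy obtain v v' where v: "v \<in> A" "x = (\<lambda>t. v t - w t)" and v': "v' \<in> A" "y = (\<lambda>t. v' t - r t)"
        and yz: "y \<noteq> zero_opt"
        by (auto simp: shift_def)
      show "z \<in> shift (A - {r}) w"
      proof (cases "x = (\<lambda>t. r t - w t)")
        case True
        have "v' \<noteq> r" using yz v' by (auto simp: zero_opt_def)
        moreover have "z = (\<lambda>t. v' t - w t)" using True z v' by (simp add: l_def)
        ultimately show ?thesis using v' by (auto simp: shift_def)
      next
        case False
        have "v \<noteq> r" using False v by auto
        moreover have "z = x" using False z by (simp add: l_def)
        ultimately show ?thesis using v by (auto simp: shift_def)
      qed
    qed
  next
    show "shift (A - {r}) w \<subseteq> posi_comb l (shift A w) ?Y"
    proof
      fix z assume "z \<in> shift (A - {r}) w"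
      then obtain v where v: "v \<in> A" "v \<noteq> r" "z = (\<lambda>t. v t - w t)" by (auto simp: shift_def)
      have ne: "z \<noteq> (\<lambda>t. r t - w t)"
      proof
        assume "z = (\<lambda>t. r t - w t)"
        then have "\<And>t. v t - w t = r t - w t" using v by (metis)
        then have "v = r" by (auto simp: fun_eq_iff)
        then show False using v by simp
      qed
      have zA: "z \<in> shift A w" using v by (auto simp: shift_def)
      have "z = (\<lambda>t. fst (l (z, y0)) * z t + snd (l (z, y0)) * y0 t)"
        using ne by (simp add: l_def)
      then show "z \<in> posi_comb l (shift A w) ?Y"
        unfolding posi_comb_def using zA y0 by (auto simp: image_iff intro!: bexI[of _ "(z,y0)"])
    qed
  qed
  show ?thesis using comb eq by simp
qed

lemma K_reduce_aux:
  assumes K: "coherent_K K" and fF: "finite F"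
  shows "\<And>A. finite A \<Longrightarrow> u \<in> A \<Longrightarrow> F \<subseteq> A \<Longrightarrow> u \<notin> F \<Longrightarrow> shift A u \<in> K
     \<Longrightarrow> (\<forall>w\<in>F. shift A w \<in> K) \<Longrightarrow> shift (A - insert u F) u \<in> K"
  using fF
proof (induction F rule: finite_induct)
  case empty
  then show ?case using cK_0[OF K, of "shift A u"] by (simp add: shift_minus)
next
  case (insert r F)
  let ?A = "A - {r}"
  have r: "r \<in> A" "u \<noteq> r" using insert by auto
  have "shift ?A u \<in> K" using K_elim[OF K _ r(1)] insert r by auto
  moreover have "\<forall>w\<in>F. shift ?A w \<in> K"
  proof
    fix w assume "w \<in> F"
    then show "shift ?A w \<in> K" using K_elim[OF K _ r(1), of w] insert by auto
  qed
  moreover have "finite ?A" "u \<in> ?A" "F \<subseteq> ?A" "u \<notin> F" using insert.prems insert.hyps r by auto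
  ultimately have "shift (?A - insert u F) u \<in> K"
    using insert.IH[of ?A] by blast
  moreover have "?A - insert u F = A - insert u (insert r F)" by auto
  ultimately show ?case by simp
qed

lemma K_reduce:
  assumes K: "coherent_K K" and fA: "finite A" and R: "R \<subseteq> A" and H: "\<forall>w\<in>R. shift A w \<in> K"
    and u: "u \<in> R"
  shows "shift (A - R) u \<in> K"
proof -
  have "shift (A - insert u (R - {u})) u \<in> K"
    using K_reduce_aux[OF K, of "R - {u}" A u] fA R H u finite_subset[OF R fA] by auto
  moreover have "insert u (R - {u}) = R" using u by auto
  ultimately show ?thesis by simp
qed

lemma dir1:
  assumes C: "choice_function C" and cons: "consistent_cf C"
  shows "consistent_assessment (assessment_of C)"
proof -
  obtain C' where coh: "coherent_cf C'" and sub: "\<forall>A. finite A \<longrightarrow> C' A \<subseteq> C A"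
    using cons unfolding consistent_cf_def by blast
  have cf': "choice_function C'"
   and C0: "\<forall>A. finite A \<and> A \<noteq> {} \<longrightarrow> C' A \<noteq> {}"
   and C1: "\<forall>A u. finite A \<and> u \<in> A \<longrightarrow> (u \<in> C' A \<longleftrightarrow> zero_opt \<in> C' (shift A u))"
   and C2: "\<forall>u. pos_opt u \<longrightarrow> {u} \<in> K_of C'"
   and C3: "\<forall>A\<in>K_of C'. \<forall>B\<in>K_of C'. \<forall>l. (\<forall>p\<in>A \<times> B. pos_weight (l p)) \<longrightarrow>
         posi_comb l A B \<in> K_of C'"
   and C4: "\<forall>A B. finite A \<and> finite B \<and> A \<subseteq> B \<longrightarrow> rej C' A \<subseteq> rej C' B"
    using coh unfolding coherent_cf_def by simp_all
  let ?K = "K_of C'"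
  have K: "coherent_K ?K"
    unfolding coherent_K_def
  proof (intro conjI)
    show "\<forall>A\<in>?K. finite A" by (simp add: K_of_def)
    show "\<forall>A\<in>?K. A - {zero_opt} \<in> ?K" by (auto simp: K_of_def)
    show "{zero_opt} \<notin> ?K"
    proof
      assume "{zero_opt} \<in> ?K"
      then have "zero_opt \<notin> C' {zero_opt}" by (simp add: K_of_def)
      moreover have "C' {zero_opt} \<noteq> {}" using C0 by auto
      moreover have "C' {zero_opt} \<subseteq> {zero_opt}" using cf' unfolding choice_function_def by auto
      ultimately show False by auto
    qed
    show "\<forall>u. pos_opt u \<longrightarrow> {u} \<in> ?K" using C2 .
    show "\<forall>A\<in>?K. \<forall>B\<in>?K. \<forall>l. (\<forall>p\<in>A \<times> B. pos_weight (l p)) \<longrightarrow> posi_comb l A B \<in> ?K" using C3 .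
    show "\<forall>A\<in>?K. \<forall>Q. finite Q \<longrightarrow> A \<union> Q \<in> ?K"
    proof (intro ballI allI impI)
      fix A Q :: "'a opt set" assume A: "A \<in> ?K" and Q: "finite Q"
      have fA: "finite A" and n: "zero_opt \<notin> C' (insert zero_opt A)" using A by (auto simp: K_of_def)
      have "zero_opt \<in> rej C' (insert zero_opt A)" using n by (simp add: rej_def)
      moreover have "rej C' (insert zero_opt A) \<subseteq> rej C' (insert zero_opt (A \<union> Q))"
        using C4[rule_format, of "insert zero_opt A" "insert zero_opt (A \<union> Q)"] fA Q by auto
      ultimately have "zero_opt \<notin> C' (insert zero_opt (A \<union> Q))" by (auto simp: rej_def)
      then show "A \<union> Q \<in> ?K" using fA Q by (simp add: K_of_def)
    qed
  qed
  have rejK: "shift A w \<in> ?K" if "finite A" "w \<in> A" "w \<notin> C' A" for A w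
  proof -
    have "zero_opt \<notin> C' (shift A w)" using C1 that by blast
    moreover have "insert zero_opt (shift A w) = shift A w" using shift_zero_mem[OF that(2)] by auto
    ultimately show ?thesis using shift_finite[OF that(1)] by (simp add: K_of_def)
  qed
  have "assessment_of C \<subseteq> ?K"
  proof
    fix X assume "X \<in> assessment_of C"
    then obtain A u where X: "X = shift (C A) u" and fA: "finite A" and u: "u \<in> rej C A"
      by (auto simp: assessment_of_def)
    have uA: "u \<in> A" "u \<notin> C' A" using u sub fA by (auto simp: rej_def)
    have "shift (A - (A - C' A)) u \<in> ?K"
      by (rule K_reduce[OF K fA]) (use uA rejK fA in auto)
    moreover have "A - (A - C' A) = C' A" using cf' fA unfolding choice_function_def by auto
    ultimately have "shift (C' A) u \<in> ?K" by simp
    moreover have "shift (C' A) u \<subseteq> shift (C A) u" using sub fA shift_mono by blast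
    moreover have "finite (shift (C A) u)"
      using C fA unfolding choice_function_def by (meson finite_subset shift_finite)
    ultimately show "X \<in> ?K" using K_sup[OF K] X by blast
  qed
  then show ?thesis using K unfolding consistent_assessment_def by blast
qed

lemma dir2:
  assumes C: "choice_function C" and cons: "consistent_assessment (assessment_of C)"
  shows "consistent_cf C"
proof -
  obtain K where K: "coherent_K K" and sub: "assessment_of C \<subseteq> K"
    using cons unfolding consistent_assessment_def by blast
  have Kfin: "\<forall>A\<in>K. finite A" and K0: "\<forall>A\<in>K. A - {zero_opt} \<in> K"
    and K2: "\<forall>u. pos_opt u \<longrightarrow> {u} \<in> K"
    and K3: "\<forall>A\<in>K. \<forall>B\<in>K. \<forall>l. (\<forall>p\<in>A \<times> B. pos_weight (l p)) \<longrightarrow> posi_comb l A B \<in> K"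
    using K unfolding coherent_K_def by simp_all
  define C' where "C' = (\<lambda>A. {u \<in> A. shift A u \<notin> K})"
  have KC: "K_of C' = K"
  proof
    show "K_of C' \<subseteq> K"
    proof
      fix A assume "A \<in> K_of C'"
      then have fA: "finite A" and "shift (insert zero_opt A) zero_opt \<in> K"
        by (auto simp: K_of_def C'_def)
      then have I: "insert zero_opt A \<in> K" by (simp add: shift_by_zero)
      then have "insert zero_opt A - {zero_opt} \<in> K" using K0 by blast
      moreover have "insert zero_opt A - {zero_opt} \<subseteq> A" by auto
      ultimately show "A \<in> K" using K_sup[OF K] fA by blast
    qed
  next
    show "K \<subseteq> K_of C'"
    proof
      fix A assume A: "A \<in> K"
      then have fA: "finite A" using Kfin by blast
      have "insert zero_opt A \<in> K" using K_sup[OF K A] fA by auto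
      then show "A \<in> K_of C'" using fA by (simp add: K_of_def C'_def shift_by_zero)
    qed
  qed
  have coh: "coherent_cf C'"
    unfolding coherent_cf_def
  proof (intro conjI)
    show "choice_function C'" by (auto simp: choice_function_def C'_def)
    show "\<forall>A. finite A \<and> A \<noteq> {} \<longrightarrow> C' A \<noteq> {}"
    proof (intro allI impI)
      fix A :: "'a opt set" assume A: "finite A \<and> A \<noteq> {}"
      show "C' A \<noteq> {}"
      proof
        assume e: "C' A = {}"
        obtain u where u: "u \<in> A" using A by blast
        have "shift (A - A) u \<in> K"
          by (rule K_reduce[OF K]) (use A e u in \<open>auto simp: C'_def\<close>)
        then show False using K_empty[OF K] by (simp add: shift_def)
      qed
    qed
    show "\<forall>A u. finite A \<and> u \<in> A \<longrightarrow> (u \<in> C' A \<longleftrightarrow> zero_opt \<in> C' (shift A u))"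
      by (auto simp: C'_def shift_by_zero shift_zero_mem)
    show "\<forall>u. pos_opt u \<longrightarrow> {u} \<in> K_of C'" using K2 KC by simp
    show "\<forall>A\<in>K_of C'. \<forall>B\<in>K_of C'. \<forall>l. (\<forall>p\<in>A \<times> B. pos_weight (l p)) \<longrightarrow>
         posi_comb l A B \<in> K_of C'" using K3 KC by simp
    show "\<forall>A B. finite A \<and> finite B \<and> A \<subseteq> B \<longrightarrow> rej C' A \<subseteq> rej C' B"
    proof (intro allI impI subsetI)
      fix A B :: "'a opt set" and u assume AB: "finite A \<and> finite B \<and> A \<subseteq> B" and u: "u \<in> rej C' A"
      then have "u \<in> A" "shift A u \<in> K" by (auto simp: rej_def C'_def)
      moreover have "shift A u \<subseteq> shift B u" using AB shift_mono by blast
      ultimately have "shift B u \<in> K" using K_sup[OF K _ _ shift_finite[of B u]] AB by blast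
      then show "u \<in> rej C' B" using \<open>u \<in> A\<close> AB by (auto simp: rej_def C'_def)
    qed
  qed
  have "\<forall>A. finite A \<longrightarrow> C' A \<subseteq> C A"
  proof (intro allI impI subsetI)
    fix A u assume fA: "finite A" and u: "u \<in> C' A"
    show "u \<in> C A"
    proof (rule ccontr)
      assume "u \<notin> C A"
      then have "u \<in> rej C A" using u by (auto simp: rej_def C'_def)
      then have "shift (C A) u \<in> K" using sub fA by (auto simp: assessment_of_def)
      moreover have "shift (C A) u \<subseteq> shift A u" using C fA shift_mono unfolding choice_function_def by blast
      ultimately have "shift A u \<in> K" using K_sup[OF K _ _ shift_finite[OF fA, of u]] by blast
      then show False using u by (simp add: C'_def)
    qed
  qed
  then show ?thesis using coh unfolding consistent_cf_def by blast
qed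

theorem mainTheorem17:
  fixes C :: "'x opt set \<Rightarrow> 'x opt set"
  assumes "choice_function C"
  shows "consistent_cf C \<longleftrightarrow> consistent_assessment (assessment_of C)"
  using dir1[OF assms] dir2[OF assms] by blast

end
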